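(* Let $L\neq0$ and write $\ell=(L^2)^{1/3}$. For $h<-\frac32\ell$ let $u_1\in(0,\ell)$ and $u_2\in(\ell,+\infty)$ be the unique numbers with $2u_i+\frac{L^2}{u_i^2}=-2h$, and define $C_{1,\xi}(h)$ and $C_{2,\xi}(h)$ by $$\Big(u_1+\frac{2L^2}{u_1^2}\Big)u_1=2(C_{1,\xi}(h)+1),\qquad \Big(u_2+\frac{2L^2}{u_2^2}\Big)u_2=2(C_{2,\xi}(h)+1);$$ at $h=-\frac32\ell$ set $C_{1,\xi}(h)=C_{2,\xi}(h)=\frac32\ell^2-1$ (the limiting value). Then for every $h\in(-\infty,-\frac32\ell]$ one has $C_{1,\xi}(h)\le C_{2,\xi}(h)$, with equality if and only if $h=-\frac32\ell$.
   Context: Equivalently, $C_{1,\xi}(h)$ (resp. $C_{2,\xi}(h)$) is the value of $c$ for which the cubic $f(u)=u^3+2hu^2+2(c+1)u-L^2$ has a double positive root smaller (resp. larger) than its simple root. *)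

theory Defs
  imports "HOL-Analysis.Analysis"
begin

definition ellL :: "real \<Rightarrow> real" where
  "ellL L = root 3 (L^2)"

definition u1 :: "real \<Rightarrow> real \<Rightarrow> real" where
  "u1 L h = (THE u. 0 < u \<and> u < ellL L \<and> 2*u + L^2/u^2 = -2*h)"

definition u2 :: "real \<Rightarrow> real \<Rightarrow> real" where
  "u2 L h = (THE u. ellL L < u \<and> 2*u + L^2/u^2 = -2*h)"

definition C1xi :: "real \<Rightarrow> real \<Rightarrow> real" where
  "C1xi L h = (if h = -(3/2) * ellL L then (3/2) * (ellL L)^2 - 1
     else (u1 L h + 2*L^2/(u1 L h)^2) * u1 L h / 2 - 1)"

definition C2xi :: "real \<Rightarrow> real \<Rightarrow> real" where
  "C2xi L h = (if h = -(3/2) * ellL L then (3/2) * (ellL L)^2 - 1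
     else (u2 L h + 2*L^2/(u2 L h)^2) * u2 L h / 2 - 1)"

end

theory Submission
  imports Defs
begin

lemma pair_id:
  fixes u v c :: real
  assumes "u > 0" "v > 0" "u \<noteq> v" "2 * u + c/u^2 = 2 *  v + c/v^2"
  shows "2 * u^2 *  v^2 = c * (u+v)"
proof -
  have "2 * u * u^2 *  v^2 + c *  v^2 = 2 *  v * u^2 *  v^2 + c * u^2"
    using assms(4) assms(1,2) by (simp add: field_simps)
  hence "(u - v) * (2 * u^2 *  v^2 - c * (u+v)) = 0"
    by (simp add: algebra_simps power2_eq_square)
  thus ?thesis using assms(3) by simp
qed

lemma low_uniq:
  fixes u v l :: real
  assumes "0 < u" "u < l" "0 < v" "v < l" "2 * u + l^3/u^2 = 2 *  v + l^3/v^2"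
  shows "u = v"
proof (rule ccontr)
  assume ne: "u \<noteq> v"
  have e: "2 * u^2 *  v^2 = l^3 * (u+v)" using pair_id[OF assms(1,3) ne assms(5)] .
  have a1: "u *  v < l *  v" using assms by (intro mult_strict_right_mono) auto
  have a2: "u *  v < u * l" using assms by (intro mult_strict_left_mono) auto
  have a: "2 * u *  v < l * (u+v)" using a1 a2 by (simp add: algebra_simps)
  have b: "u *  v < l^2" using assms by (simp add: power2_eq_square mult_strict_mono)
  have "2 * u^2 *  v^2 = (2 * u *  v) * (u *  v)" by (simp add: power2_eq_square)
  also have "\<dots> < (l * (u+v)) * l^2" using a b assms
    by (intro mult_strict_mono[OF a b]) (auto simp: mult_pos_pos)
  finally show False using e by (simp add: power3_eq_cube power2_eq_square algebra_simps)
qed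

lemma high_uniq:
  fixes u v l :: real
  assumes "0 < l" "l < u" "l < v" "2 * u + l^3/u^2 = 2 *  v + l^3/v^2"
  shows "u = v"
proof (rule ccontr)
  assume ne: "u \<noteq> v"
  have e: "2 * u^2 *  v^2 = l^3 * (u+v)" using pair_id[of u v, OF _ _ ne assms(4)] assms by simp
  have a1: "u *  v > l *  v" using assms by (intro mult_strict_right_mono) auto
  have a2: "u *  v > u * l" using assms by (intro mult_strict_left_mono) auto
  have a: "2 * u *  v > l * (u+v)" using a1 a2 by (simp add: algebra_simps)
  have b: "u *  v > l^2" using assms by (simp add: power2_eq_square mult_strict_mono)
  have "(l * (u+v)) * l^2 < (2 * u *  v) * (u *  v)" using a b assms
    by (intro mult_strict_mono[OF a b]) (auto simp: mult_pos_pos)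
  also have "\<dots> = 2 * u^2 *  v^2" by (simp add: power2_eq_square)
  finally show False using e by (simp add: power3_eq_cube power2_eq_square algebra_simps)
qed

lemma low_ex:
  fixes l s :: real
  assumes "0 < l" "3 * l < s"
  shows "\<exists>u. 0 < u \<and> u < l \<and> 2 * u + l^3/u^2 = s"
proof -
  define g where "g = (\<lambda>u::real. 2 * u + l^3/u^2)"
  define a where "a = l^2/s"
  have s0: "s > 0" using assms by simp
  have a0: "0 < a" using assms s0 by (simp add: a_def)
  have al: "a < l" using assms s0 by (simp add: a_def power2_eq_square field_simps)
  have ga: "g a \<ge> s"
  proof -
    have "l^3/a^2 = s^2/l" using assms s0 by (simp add: a_def power2_eq_square power3_eq_cube field_simps)
    also have "\<dots> \<ge> s" using assms s0 by (simp add: power2_eq_square field_simps)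
    finally show ?thesis using a0 by (simp add: g_def)
  qed
  have gl: "g l \<le> s" using assms by (simp add: g_def power2_eq_square power3_eq_cube)
  have "\<forall>x. a \<le> x \<and> x \<le> l \<longrightarrow> isCont g x" using a0 unfolding g_def
    by (auto intro!: continuous_intros)
  from IVT2[of g l s a, OF gl ga _ this] al obtain x where x: "a \<le> x" "x \<le> l" "g x = s" by auto
  have "x \<noteq> l" using x assms by (auto simp: g_def power2_eq_square power3_eq_cube)
  thus ?thesis using x a0 unfolding g_def by (intro exI[of _ x]) auto
qed

lemma high_ex:
  fixes l s :: real
  assumes "0 < l" "3 * l < s"
  shows "\<exists>u. l < u \<and> 2 * u + l^3/u^2 = s"
proof -
  define g where "g = (\<lambda>u::real. 2 * u + l^3/u^2)"
  have s0: "s > 0" using assms by simp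
  have gs: "g s \<ge> s" using assms s0 by (simp add: g_def)
  have gl: "g l \<le> s" using assms by (simp add: g_def power2_eq_square power3_eq_cube)
  have "\<forall>x. l \<le> x \<and> x \<le> s \<longrightarrow> isCont g x" using assms unfolding g_def
    by (auto intro!: continuous_intros)
  from IVT[of g l s s, OF gl gs _ this] assms obtain x where x: "l \<le> x" "x \<le> s" "g x = s" by auto
  have "x \<noteq> l" using x assms by (auto simp: g_def power2_eq_square power3_eq_cube)
  thus ?thesis using x unfolding g_def by (intro exI[of _ x]) auto
qed

theorem lemma5p1:
  fixes L h :: real
  assumes "L \<noteq> 0" and "h \<le> -(3/2) * ellL L"
  shows "C1xi L h \<le> C2xi L h \<and> (C1xi L h = C2xi L h \<longleftrightarrow> h = -(3/2) * ellL L)"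
proof (cases "h = -(3/2) * ellL L")
  case True
  then show ?thesis by (simp add: C1xi_def C2xi_def)
next
  case False
  define l where "l = ellL L"
  have l0: "l > 0" using assms(1) by (simp add: l_def ellL_def)
  have l3: "l^3 = L^2" unfolding l_def ellL_def by (simp add: odd_real_root_pow)
  define s where "s = -2 * h"
  have s: "3 * l < s" using assms(2) False by (simp add: s_def l_def)
  obtain v1 where v1: "0 < v1" "v1 < l" "2 *  v1 + l^3/v1^2 = s" using low_ex[OF l0 s] by blast
  obtain v2 where v2: "l < v2" "2 *  v2 + l^3/v2^2 = s" using high_ex[OF l0 s] by blast
  have u1: "u1 L h = v1" unfolding u1_def
  proof (rule the_equality)
    show "0 < v1 \<and> v1 < ellL L \<and> 2 *  v1 + L^2/v1^2 = -2 * h" using v1 l3 by (simp add: l_def s_def)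
  next
    fix u assume "0 < u \<and> u < ellL L \<and> 2 * u + L^2/u^2 = -2 * h"
    thus "u = v1" using low_uniq[of u l v1] v1 l3 by (simp add: l_def s_def)
  qed
  have u2: "u2 L h = v2" unfolding u2_def
  proof (rule the_equality)
    show "ellL L < v2 \<and> 2 *  v2 + L^2/v2^2 = -2 * h" using v2 l3 by (simp add: l_def s_def)
  next
    fix u assume "ellL L < u \<and> 2 * u + L^2/u^2 = -2 * h"
    thus "u = v2" using high_uniq[of l u v2] v2 l3 l0 by (simp add: l_def s_def)
  qed
  have v20: "v2 > 0" using v2 l0 by simp
  have ne: "v1 \<noteq> v2" using v1 v2 by simp
  have e: "2 *  v1^2 *  v2^2 = l^3 * (v1+v2)" using pair_id[OF v1(1) v20 ne] v1 v2 by simp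
  have C: "(v1 + 2 * l^3/v1^2) *  v1/2 - 1 < (v2 + 2 * l^3/v2^2) *  v2/2 - 1"
  proof -
    have eq1: "(v1 + 2 * l^3/v1^2) *  v1/2 = v1^2/2 + l^3/v1" using v1 by (simp add: power2_eq_square field_simps)
    have eq2: "(v2 + 2 * l^3/v2^2) *  v2/2 = v2^2/2 + l^3/v2" using v20 by (simp add: power2_eq_square field_simps)
    have d: "v2^2/2 + l^3/v2 - (v1^2/2 + l^3/v1) = (v2 - v1) * ((v1+v2)/2 - l^3/(v1 *  v2))"
      using v1 v20 by (simp add: power2_eq_square field_simps)
    have q: "l^3/(v1 *  v2) = 2 *  v1 *  v2/(v1+v2)" using e v1 v20
      by (simp add: power2_eq_square field_simps)
    have "2 *  v1 *  v2/(v1+v2) < (v1+v2)/2"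
    proof -
      have "4 * (v1 *  v2) < (v1+v2) * (v1+v2)" using ne
      proof -
        have "0 < (v1 - v2)^2" using ne by simp
        thus ?thesis by (simp add: power2_eq_square algebra_simps)
      qed
      thus ?thesis using v1 v20 by (simp add: field_simps)
    qed
    hence "0 < (v2 - v1) * ((v1+v2)/2 - l^3/(v1 *  v2))" using q v1 v2 by simp
    thus ?thesis using eq1 eq2 d by simp
  qed
  show ?thesis using C False u1 u2 l3 by (simp add: C1xi_def C2xi_def l_def)
qed

end
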